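(* Let $\kappa_1,\kappa_2$ be real constants, let $\delta\neq 0$ be a real constant, let $F$ be a smooth real function of one variable and let $G$ be any antiderivative of $F$ (i.e. $G'=F$). Consider the system $$\sigma_r+\frac{\kappa_1\sigma}{r}=\delta\,u_{tt},\qquad u_r+\frac{\kappa_2 u}{r}=\frac{1}{\delta}F(\sigma)$$ for smooth functions $\sigma(r,t)$, $u(r,t)$ with $r>0$. Then every smooth solution $(\sigma,u)$ satisfies the three conservation laws $$\partial_r\big(r^{\kappa_1}\sigma\big)+\partial_t\big(-\delta r^{\kappa_1}u_t\big)=0,$$ $$\partial_r\big(r^{\kappa_1}t\sigma\big)+\partial_t\big(\delta r^{\kappa_1}(u-tu_t)\big)=0,$$ $$\partial_r\big(r^{\kappa_1+\kappa_2}u\,\sigma_t\big)+\partial_t\Big(r^{\kappa_1+\kappa_2}\Big(\tfrac{\delta}{2}\big(u_t^2-2uu_{tt}\big)-\tfrac{1}{\delta}G(\sigma)\Big)\Big)=0.$$ These correspond to the multipliers $(\Lambda^1,\Lambda^2)=(r^{\kappa_1},0)$, $(tr^{\kappa_1},0)$ and $(-r^{\kappa_1+\kappa_2}u_t,\ r^{\kappa_1+\kappa_2}\sigma_t)$, respectively, for the equations $\sigma_r+\kappa_1\sigma/r-\delta u_{tt}=0$, $u_r+\kappa_2u/r-F(\sigma)/\delta=0$.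
   Context: Subscripts denote partial derivatives. The system models shear waves in cylindrical geometry, with $\sigma$ the stress and $u$ the displacement and with constitutive relation (strain) $=F(\sigma)$. *)

theory Defs
  imports "HOL-Analysis.Analysis"
begin

definition pd_r :: "(real \<times> real \<Rightarrow> real) \<Rightarrow> real \<times> real \<Rightarrow> real" where
  "pd_r f = (\<lambda>(r, t). deriv (\<lambda>s. f (s, t)) r)"

definition pd_t :: "(real \<times> real \<Rightarrow> real) \<Rightarrow> real \<times> real \<Rightarrow> real" where
  "pd_t f = (\<lambda>(r, t). deriv (\<lambda>s. f (r, s)) t)"

fun iter_pd :: "bool list \<Rightarrow> (real \<times> real \<Rightarrow> real) \<Rightarrow> real \<times> real \<Rightarrow> real" where
  "iter_pd [] f = f"
| "iter_pd (b # bs) f = (if b then pd_r else pd_t) (iter_pd bs f)"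

definition smooth2_on :: "(real \<times> real) set \<Rightarrow> (real \<times> real \<Rightarrow> real) \<Rightarrow> bool" where
  "smooth2_on U f \<longleftrightarrow> (\<forall>ws. \<forall>p\<in>U. iter_pd ws f differentiable (at p))"

definition smooth1 :: "(real \<Rightarrow> real) \<Rightarrow> bool" where
  "smooth1 F \<longleftrightarrow> (\<forall>n x. ((deriv ^^ n) F) differentiable (at x))"

end

theory Submission
  imports Defs
begin

lemma hasr:
  assumes "g differentiable (at (x, y))"
  shows "((\<lambda>s. g (s, y)) has_real_derivative pd_r g (x, y)) (at x)"
proof -
  have "(\<lambda>s. (s, y)) differentiable (at x)" by simp
  then have "(g \<circ> (\<lambda>s. (s, y))) differentiable (at x)"
    using assms by (intro differentiable_chain_at) auto
  then have "(\<lambda>s. g (s, y)) differentiable (at x)" by (simp add: o_def)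
  then show ?thesis by (simp add: pd_r_def DERIV_deriv_iff_real_differentiable)
qed

lemma hast:
  assumes "g differentiable (at (x, y))"
  shows "((\<lambda>s. g (x, s)) has_real_derivative pd_t g (x, y)) (at y)"
proof -
  have "(\<lambda>s. (x, s)) differentiable (at y)" by simp
  then have "(g \<circ> (\<lambda>s. (x, s))) differentiable (at y)"
    using assms by (intro differentiable_chain_at) auto
  then have "(\<lambda>s. g (x, s)) differentiable (at y)" by (simp add: o_def)
  then show ?thesis by (simp add: pd_t_def DERIV_deriv_iff_real_differentiable)
qed

lemma clairaut:
  fixes f :: "real \<times> real \<Rightarrow> real"
  assumes sm: "smooth2_on {p. fst p > 0} f" and r: "r > 0"
  shows "pd_r (pd_t f) (r, t) = pd_t (pd_r f) (r, t)"
proof (rule ccontr)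
  assume ne: "pd_r (pd_t f) (r, t) \<noteq> pd_t (pd_r f) (r, t)"
  have D: "\<And>ws a b. a > 0 \<Longrightarrow> iter_pd ws f differentiable (at (a, b))"
    using sm unfolding smooth2_on_def by auto
  have d0: "\<And>a b. a > 0 \<Longrightarrow> f differentiable (at (a, b))" using D[of _ "[]"] by simp
  have dr: "\<And>a b. a > 0 \<Longrightarrow> pd_r f differentiable (at (a, b))" using D[of _ "[True]"] by simp
  have dt: "\<And>a b. a > 0 \<Longrightarrow> pd_t f differentiable (at (a, b))" using D[of _ "[False]"] by simp
  have c1: "isCont (pd_r (pd_t f)) (r, t)"
    using D[of r "[True, False]" t] r by (simp add: differentiable_imp_continuous_within)
  have c2: "isCont (pd_t (pd_r f)) (r, t)"
    using D[of r "[False, True]" t] r by (simp add: differentiable_imp_continuous_within)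
  define e where "e = \<bar>pd_r (pd_t f) (r, t) - pd_t (pd_r f) (r, t)\<bar> / 2"
  have e: "e > 0" using ne by (simp add: e_def)
  obtain d1 where d1: "d1 > 0" "\<And>x'. dist x' (r, t) < d1 \<Longrightarrow> dist (pd_r (pd_t f) x') (pd_r (pd_t f) (r, t)) < e"
    using c1 e unfolding continuous_at_eps_delta by blast
  obtain d2 where d2: "d2 > 0" "\<And>x'. dist x' (r, t) < d2 \<Longrightarrow> dist (pd_t (pd_r f) x') (pd_t (pd_r f) (r, t)) < e"
    using c2 e unfolding continuous_at_eps_delta by blast
  define h where "h = min d1 d2 / 2"
  have h: "h > 0" "2 * h \<le> d1" "2 * h \<le> d2" using d1 d2 by (auto simp: h_def)
  have close: "dist (a, b) (r, t) < 2 * h" if "r < a" "a < r + h" "t < b" "b < t + h" for a b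
  proof -
    have "dist (a, b) (r, t) \<le> \<bar>dist a r\<bar> + \<bar>dist b t\<bar>"
      unfolding dist_Pair_Pair by (rule sqrt_sum_squares_le_sum_abs)
    also have "\<dots> < 2 * h" using that by (simp add: dist_real_def)
    finally show ?thesis .
  qed
  define \<Delta> where "\<Delta> = f (r + h, t + h) - f (r + h, t) - f (r, t + h) + f (r, t)"
  obtain \<xi> where \<xi>: "r < \<xi>" "\<xi> < r + h"
    "(\<lambda>s. f (s, t + h) - f (s, t)) (r + h) - (\<lambda>s. f (s, t + h) - f (s, t)) r
       = (r + h - r) * (pd_r f (\<xi>, t + h) - pd_r f (\<xi>, t))"
    apply (rule exE[OF MVT2[of r "r + h" "\<lambda>s. f (s, t + h) - f (s, t)" "\<lambda>s. pd_r f (s, t + h) - pd_r f (s, t)"]])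
    using h r by (auto intro!: derivative_intros hasr d0)
  have r\<xi>: "\<xi> > 0" using \<xi> r by simp
  obtain \<eta> where \<eta>: "t < \<eta>" "\<eta> < t + h"
    "pd_r f (\<xi>, t + h) - pd_r f (\<xi>, t) = (t + h - t) * pd_t (pd_r f) (\<xi>, \<eta>)"
    apply (rule exE[OF MVT2[of t "t + h" "\<lambda>s. pd_r f (\<xi>, s)" "\<lambda>s. pd_t (pd_r f) (\<xi>, s)"]])
    using h r\<xi> by (auto intro!: hast dr)
  have A: "\<Delta> = h * h * pd_t (pd_r f) (\<xi>, \<eta>)"
    using \<xi>(3) \<eta>(3) by (simp add: \<Delta>_def algebra_simps)
  obtain \<eta>' where \<eta>': "t < \<eta>'" "\<eta>' < t + h"
    "(\<lambda>s. f (r + h, s) - f (r, s)) (t + h) - (\<lambda>s. f (r + h, s) - f (r, s)) t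
       = (t + h - t) * (pd_t f (r + h, \<eta>') - pd_t f (r, \<eta>'))"
    apply (rule exE[OF MVT2[of t "t + h" "\<lambda>s. f (r + h, s) - f (r, s)" "\<lambda>s. pd_t f (r + h, s) - pd_t f (r, s)"]])
    using h r by (auto intro!: derivative_intros hast d0)
  obtain \<xi>' where \<xi>': "r < \<xi>'" "\<xi>' < r + h"
    "pd_t f (r + h, \<eta>') - pd_t f (r, \<eta>') = (r + h - r) * pd_r (pd_t f) (\<xi>', \<eta>')"
    apply (rule exE[OF MVT2[of r "r + h" "\<lambda>s. pd_t f (s, \<eta>')" "\<lambda>s. pd_r (pd_t f) (s, \<eta>')"]])
    using h r by (auto intro!: hasr dt)
  have B: "\<Delta> = h * h * pd_r (pd_t f) (\<xi>', \<eta>')"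
    using \<xi>'(3) \<eta>'(3) by (simp add: \<Delta>_def algebra_simps)
  have eq: "pd_t (pd_r f) (\<xi>, \<eta>) = pd_r (pd_t f) (\<xi>', \<eta>')"
    using A B h by simp
  have "dist (pd_t (pd_r f) (\<xi>, \<eta>)) (pd_t (pd_r f) (r, t)) < e"
    using d2(2)[OF order.strict_trans2[OF close[OF \<xi>(1,2) \<eta>(1,2)] h(3)]] .
  moreover have "dist (pd_r (pd_t f) (\<xi>', \<eta>')) (pd_r (pd_t f) (r, t)) < e"
    using d1(2)[OF order.strict_trans2[OF close[OF \<xi>'(1,2) \<eta>'(1,2)] h(2)]] .
  ultimately have "\<bar>pd_r (pd_t f) (\<xi>', \<eta>') - pd_t (pd_r f) (r, t)\<bar> < e" "\<bar>pd_r (pd_t f) (\<xi>', \<eta>') - pd_r (pd_t f) (r, t)\<bar> < e"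
    using eq unfolding dist_real_def by auto
  moreover have "False" if "\<bar>x - B\<bar> < \<bar>A - B\<bar> / 2" "\<bar>x - A\<bar> < \<bar>A - B\<bar> / 2" for x A B :: real
    using that abs_triangle_ineq[of "x - A" "B - x"] by (simp add: abs_minus_commute)
  ultimately show False unfolding e_def by blast
qed

theorem mainTheorem1:
  fixes \<kappa>1 \<kappa>2 \<delta> :: real
    and F G :: "real \<Rightarrow> real"
    and \<sigma> u :: "real \<times> real \<Rightarrow> real"
  assumes "\<delta> \<noteq> 0"
    and "smooth1 F"
    and "\<And>x. (G has_real_derivative F x) (at x)"
    and "smooth2_on {p. fst p > 0} \<sigma>"
    and "smooth2_on {p. fst p > 0} u"
    and "\<And>r t. r > 0 \<Longrightarrow>
           pd_r \<sigma> (r, t) + \<kappa>1 * \<sigma> (r, t) / r = \<delta> * pd_t (pd_t u) (r, t)"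
    and "\<And>r t. r > 0 \<Longrightarrow>
           pd_r u (r, t) + \<kappa>2 * u (r, t) / r = (1 / \<delta>) * F (\<sigma> (r, t))"
  shows "(\<forall>r t. r > 0 \<longrightarrow>
           pd_r (\<lambda>(r, t). r powr \<kappa>1 * \<sigma> (r, t)) (r, t)
         + pd_t (\<lambda>(r, t). - \<delta> * r powr \<kappa>1 * pd_t u (r, t)) (r, t) = 0)
    \<and> (\<forall>r t. r > 0 \<longrightarrow>
           pd_r (\<lambda>(r, t). r powr \<kappa>1 * t * \<sigma> (r, t)) (r, t)
         + pd_t (\<lambda>(r, t). \<delta> * r powr \<kappa>1 * (u (r, t) - t * pd_t u (r, t))) (r, t) = 0)
    \<and> (\<forall>r t. r > 0 \<longrightarrow>
           pd_r (\<lambda>(r, t). r powr (\<kappa>1 + \<kappa>2) * u (r, t) * pd_t \<sigma> (r, t)) (r, t)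
         + pd_t (\<lambda>(r, t). r powr (\<kappa>1 + \<kappa>2) *
               ((\<delta> / 2) * ((pd_t u (r, t))\<^sup>2 - 2 * u (r, t) * pd_t (pd_t u) (r, t))
                - (1 / \<delta>) * G (\<sigma> (r, t)))) (r, t) = 0)"
proof -
  note d = assms(1)
  have Ds: "\<And>ws a b. a > 0 \<Longrightarrow> iter_pd ws \<sigma> differentiable (at (a, b))"
    using assms(4) unfolding smooth2_on_def by auto
  have Du: "\<And>ws a b. a > 0 \<Longrightarrow> iter_pd ws u differentiable (at (a, b))"
    using assms(5) unfolding smooth2_on_def by auto
  have s0: "\<And>a b. a > 0 \<Longrightarrow> \<sigma> differentiable (at (a, b))" using Ds[of _ "[]"] by simp
  have st: "\<And>a b. a > 0 \<Longrightarrow> pd_t \<sigma> differentiable (at (a, b))" using Ds[of _ "[False]"] by simp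
  have u0: "\<And>a b. a > 0 \<Longrightarrow> u differentiable (at (a, b))" using Du[of _ "[]"] by simp
  have ut: "\<And>a b. a > 0 \<Longrightarrow> pd_t u differentiable (at (a, b))" using Du[of _ "[False]"] by simp
  have utt: "\<And>a b. a > 0 \<Longrightarrow> pd_t (pd_t u) differentiable (at (a, b))" using Du[of _ "[False, False]"] by simp
  have L1: "pd_r (\<lambda>(r, t). r powr \<kappa>1 * \<sigma> (r, t)) (r, t)
         + pd_t (\<lambda>(r, t). - \<delta> * r powr \<kappa>1 * pd_t u (r, t)) (r, t) = 0" if r: "r > 0" for r t
  proof -
    have "((\<lambda>s. s powr \<kappa>1 * \<sigma> (s, t)) has_real_derivative
        \<kappa>1 * r powr (\<kappa>1 - 1) * \<sigma> (r, t) + r powr \<kappa>1 * pd_r \<sigma> (r, t)) (at r)"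
      using r by (auto intro!: derivative_eq_intros has_real_derivative_powr hasr s0)
    then have a: "pd_r (\<lambda>(r, t). r powr \<kappa>1 * \<sigma> (r, t)) (r, t) = \<kappa>1 * r powr (\<kappa>1 - 1) * \<sigma> (r, t) + r powr \<kappa>1 * pd_r \<sigma> (r, t)"
      by (simp add: pd_r_def DERIV_imp_deriv)
    have "((\<lambda>s. - \<delta> * r powr \<kappa>1 * pd_t u (r, s)) has_real_derivative
        - \<delta> * r powr \<kappa>1 * pd_t (pd_t u) (r, t)) (at t)"
      using r by (auto intro!: derivative_eq_intros hast ut)
    then have b: "pd_t (\<lambda>(r, t). - \<delta> * r powr \<kappa>1 * pd_t u (r, t)) (r, t) = - \<delta> * r powr \<kappa>1 * pd_t (pd_t u) (r, t)"
      by (simp add: pd_t_def DERIV_imp_deriv)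
    have p: "r powr (\<kappa>1 - 1) = r powr \<kappa>1 / r" using r by (simp add: powr_diff)
    have e: "pd_r \<sigma> (r, t) = \<delta> * pd_t (pd_t u) (r, t) - \<kappa>1 * \<sigma> (r, t) / r" using assms(6)[OF r, of t] by simp
    show ?thesis unfolding a b p e using r by (simp add: field_simps)
  qed
  have L2: "pd_r (\<lambda>(r, t). r powr \<kappa>1 * t * \<sigma> (r, t)) (r, t)
         + pd_t (\<lambda>(r, t). \<delta> * r powr \<kappa>1 * (u (r, t) - t * pd_t u (r, t))) (r, t) = 0" if r: "r > 0" for r t
  proof -
    have "((\<lambda>s. s powr \<kappa>1 * t * \<sigma> (s, t)) has_real_derivative
        \<kappa>1 * r powr (\<kappa>1 - 1) * t * \<sigma> (r, t) + r powr \<kappa>1 * t * pd_r \<sigma> (r, t)) (at r)"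
      using r by (auto intro!: derivative_eq_intros has_real_derivative_powr hasr s0)
    then have a: "pd_r (\<lambda>(r, t). r powr \<kappa>1 * t * \<sigma> (r, t)) (r, t) = \<kappa>1 * r powr (\<kappa>1 - 1) * t * \<sigma> (r, t) + r powr \<kappa>1 * t * pd_r \<sigma> (r, t)"
      by (simp add: pd_r_def DERIV_imp_deriv)
    have "((\<lambda>s. \<delta> * r powr \<kappa>1 * (u (r, s) - s * pd_t u (r, s))) has_real_derivative
        \<delta> * r powr \<kappa>1 * (pd_t u (r, t) - (pd_t u (r, t) + t * pd_t (pd_t u) (r, t)))) (at t)"
      using r by (auto intro!: derivative_eq_intros hast ut u0)
    then have b: "pd_t (\<lambda>(r, t). \<delta> * r powr \<kappa>1 * (u (r, t) - t * pd_t u (r, t))) (r, t) = \<delta> * r powr \<kappa>1 * (pd_t u (r, t) - (pd_t u (r, t) + t * pd_t (pd_t u) (r, t)))"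
      by (simp add: pd_t_def DERIV_imp_deriv)
    have p: "r powr (\<kappa>1 - 1) = r powr \<kappa>1 / r" using r by (simp add: powr_diff)
    have e: "pd_r \<sigma> (r, t) = \<delta> * pd_t (pd_t u) (r, t) - \<kappa>1 * \<sigma> (r, t) / r" using assms(6)[OF r, of t] by simp
    show ?thesis unfolding a b p e using r by (simp add: field_simps)
  qed
  have L3: "pd_r (\<lambda>(r, t). r powr (\<kappa>1 + \<kappa>2) * u (r, t) * pd_t \<sigma> (r, t)) (r, t)
         + pd_t (\<lambda>(r, t). r powr (\<kappa>1 + \<kappa>2) *
               ((\<delta> / 2) * ((pd_t u (r, t))\<^sup>2 - 2 * u (r, t) * pd_t (pd_t u) (r, t))
                - (1 / \<delta>) * G (\<sigma> (r, t)))) (r, t) = 0" if r: "r > 0" for r t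
  proof -
    have "((\<lambda>s. s powr (\<kappa>1 + \<kappa>2) * u (s, t) * pd_t \<sigma> (s, t)) has_real_derivative
        (\<kappa>1 + \<kappa>2) * r powr (\<kappa>1 + \<kappa>2 - 1) * u (r, t) * pd_t \<sigma> (r, t)
        + r powr (\<kappa>1 + \<kappa>2) * pd_r u (r, t) * pd_t \<sigma> (r, t)
        + r powr (\<kappa>1 + \<kappa>2) * u (r, t) * pd_r (pd_t \<sigma>) (r, t)) (at r)"
      using r by (auto intro!: derivative_eq_intros has_real_derivative_powr hasr u0 st simp: algebra_simps)
    then have a: "pd_r (\<lambda>(r, t). r powr (\<kappa>1 + \<kappa>2) * u (r, t) * pd_t \<sigma> (r, t)) (r, t) =
        (\<kappa>1 + \<kappa>2) * r powr (\<kappa>1 + \<kappa>2 - 1) * u (r, t) * pd_t \<sigma> (r, t)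
        + r powr (\<kappa>1 + \<kappa>2) * pd_r u (r, t) * pd_t \<sigma> (r, t)
        + r powr (\<kappa>1 + \<kappa>2) * u (r, t) * pd_r (pd_t \<sigma>) (r, t)"
      by (simp add: pd_r_def DERIV_imp_deriv)
    have "((\<lambda>s. r powr (\<kappa>1 + \<kappa>2) *
               ((\<delta> / 2) * ((pd_t u (r, s))\<^sup>2 - 2 * u (r, s) * pd_t (pd_t u) (r, s))
                - (1 / \<delta>) * G (\<sigma> (r, s)))) has_real_derivative
        r powr (\<kappa>1 + \<kappa>2) * ((\<delta> / 2) * (2 * pd_t u (r, t) * pd_t (pd_t u) (r, t)
           - 2 * (pd_t u (r, t) * pd_t (pd_t u) (r, t) + u (r, t) * pd_t (pd_t (pd_t u)) (r, t)))
           - (1 / \<delta>) * (F (\<sigma> (r, t)) * pd_t \<sigma> (r, t)))) (at t)"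
      using r d by (auto intro!: derivative_eq_intros hast ut u0 utt s0 DERIV_chain2[OF assms(3)]
          simp: algebra_simps)
    then have b: "pd_t (\<lambda>(r, t). r powr (\<kappa>1 + \<kappa>2) *
               ((\<delta> / 2) * ((pd_t u (r, t))\<^sup>2 - 2 * u (r, t) * pd_t (pd_t u) (r, t))
                - (1 / \<delta>) * G (\<sigma> (r, t)))) (r, t) =
        r powr (\<kappa>1 + \<kappa>2) * ((\<delta> / 2) * (2 * pd_t u (r, t) * pd_t (pd_t u) (r, t)
           - 2 * (pd_t u (r, t) * pd_t (pd_t u) (r, t) + u (r, t) * pd_t (pd_t (pd_t u)) (r, t)))
           - (1 / \<delta>) * (F (\<sigma> (r, t)) * pd_t \<sigma> (r, t)))"
      by (simp add: pd_t_def DERIV_imp_deriv)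
    have eqf: "(\<lambda>s. pd_r \<sigma> (r, s)) = (\<lambda>s. \<delta> * pd_t (pd_t u) (r, s) - \<kappa>1 * \<sigma> (r, s) / r)"
      using assms(6)[OF r] by (auto simp: algebra_simps)
    have dd: "((\<lambda>s. \<delta> * pd_t (pd_t u) (r, s) - \<kappa>1 * \<sigma> (r, s) / r) has_real_derivative
        \<delta> * pd_t (pd_t (pd_t u)) (r, t) - \<kappa>1 * pd_t \<sigma> (r, t) / r) (at t)"
      using r by (auto intro!: derivative_eq_intros hast utt s0)
    then have c0: "pd_t (pd_r \<sigma>) (r, t) = \<delta> * pd_t (pd_t (pd_t u)) (r, t) - \<kappa>1 * pd_t \<sigma> (r, t) / r"
    proof -
      have "pd_t (pd_r \<sigma>) (r, t) = deriv (\<lambda>s. pd_r \<sigma> (r, s)) t" by (simp add: pd_t_def)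
      also have "\<dots> = deriv (\<lambda>s. \<delta> * pd_t (pd_t u) (r, s) - \<kappa>1 * \<sigma> (r, s) / r) t" by (simp only: eqf)
      also have "\<dots> = \<delta> * pd_t (pd_t (pd_t u)) (r, t) - \<kappa>1 * pd_t \<sigma> (r, t) / r"
        using dd by (rule DERIV_imp_deriv)
      finally show ?thesis .
    qed
    have c: "pd_r (pd_t \<sigma>) (r, t) = \<delta> * pd_t (pd_t (pd_t u)) (r, t) - \<kappa>1 * pd_t \<sigma> (r, t) / r"
      using clairaut[OF assms(4) r, of t] c0 by simp
    have p: "r powr (\<kappa>1 + \<kappa>2 - 1) = r powr (\<kappa>1 + \<kappa>2) / r" using r by (simp add: powr_diff)
    have e: "pd_r u (r, t) = (1 / \<delta>) * F (\<sigma> (r, t)) - \<kappa>2 * u (r, t) / r" using assms(7)[OF r, of t] by simp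
    show ?thesis unfolding a b c p e using r d by (simp add: field_simps)
  qed
  show ?thesis using L1 L2 L3 by blast
qed

end
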